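(* For any code $\mathcal C\subseteq 2^{[n]}$, the canonical form of the code $\mathcal C\setminus n\subseteq 2^{[n-1]}$ consists exactly of the pseudo-monomials in $\mathrm{CF}(J_\mathcal C)$ that do not depend on $x_n$: $$\mathrm{CF}(J_{\mathcal C\setminus n})=\mathrm{CF}(J_\mathcal C)\setminus\{f\in\mathrm{CF}(J_\mathcal C): x_n \text{ or } (1-x_n)\text{ divides } f\}.$$
   Context: A code is a set $\mathcal C\subseteq 2^{[n]}$, $[n]=\{1,\dots,n\}$. Standing conventions: $\emptyset\in\mathcal C$; every neuron lies in some codeword; no two distinct neurons lie in exactly the same codewords. $\mathcal C\setminus n$ is the code on $[n-1]$ obtained by removing $n$ from every codeword. A pseudo-monomial in $\mathbb F_2[x_1,\dots,x_n]$ is $\prod_{i\in\sigma}x_i\prod_{j\in\tau}(1-x_j)$ with $\sigma\cap\tau=\emptyset$, ordered by divisibility. For a code $\mathcal D$ on $[m]$, $J_\mathcal D=\langle\rho_\sigma:\sigma\subseteq[m],\sigma\notin\mathcal D\rangle\subseteq\mathbb F_2[x_1,\dots,x_m]$ with $\rho_\sigma=\prod_{i\in\sigma}x_i\prod_{j\in[m]\setminus\sigma}(1-x_j)$, and $\mathrm{CF}(J_\mathcal D)$ is the set of minimal pseudo-monomials in $J_\mathcal D$. *)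

theory Defs
  imports "HOL-Library.Poly_Mapping" "HOL-Library.Z2"
begin

type_synonym f2poly = "(nat \<Rightarrow>\<^sub>0 nat) \<Rightarrow>\<^sub>0 bit"

definition Var :: "nat \<Rightarrow> f2poly" where
  "Var i = Poly_Mapping.single (Poly_Mapping.single i 1) 1"

definition polys :: "nat \<Rightarrow> f2poly set" where
  "polys m = {p. \<forall>mon \<in> Poly_Mapping.keys p. Poly_Mapping.keys mon \<subseteq> {1..m}}"

inductive_set ideal_gen :: "nat \<Rightarrow> f2poly set \<Rightarrow> f2poly set" for m G where
  zero: "0 \<in> ideal_gen m G"
| mult: "g \<in> G \<Longrightarrow> h \<in> polys m \<Longrightarrow> h * g \<in> ideal_gen m G"
| add: "a \<in> ideal_gen m G \<Longrightarrow> b \<in> ideal_gen m G \<Longrightarrow> a + b \<in> ideal_gen m G"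

definition dvd_in :: "nat \<Rightarrow> f2poly \<Rightarrow> f2poly \<Rightarrow> bool" where
  "dvd_in m g f \<longleftrightarrow> (\<exists>h \<in> polys m. f = g * h)"

definition pm :: "nat set \<Rightarrow> nat set \<Rightarrow> f2poly" where
  "pm \<sigma> \<tau> = (\<Prod>i\<in>\<sigma>. Var i) * (\<Prod>j\<in>\<tau>. 1 - Var j)"

definition pseudo_monomial :: "nat \<Rightarrow> f2poly \<Rightarrow> bool" where
  "pseudo_monomial m f \<longleftrightarrow>
     (\<exists>\<sigma> \<tau>. \<sigma> \<subseteq> {1..m} \<and> \<tau> \<subseteq> {1..m} \<and> \<sigma> \<inter> \<tau> = {} \<and> f = pm \<sigma> \<tau>)"

definition rho :: "nat \<Rightarrow> nat set \<Rightarrow> f2poly" where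
  "rho m \<sigma> = pm \<sigma> ({1..m} - \<sigma>)"

definition neural_ideal :: "nat \<Rightarrow> nat set set \<Rightarrow> f2poly set" where
  "neural_ideal m D = ideal_gen m {rho m \<sigma> | \<sigma>. \<sigma> \<subseteq> {1..m} \<and> \<sigma> \<notin> D}"

definition CF :: "nat \<Rightarrow> f2poly set \<Rightarrow> f2poly set" where
  "CF m J = {f. pseudo_monomial m f \<and> f \<in> J \<and>
     (\<forall>g. pseudo_monomial m g \<and> g \<in> J \<and> dvd_in m g f \<longrightarrow> g = f)}"

definition is_code :: "nat \<Rightarrow> nat set set \<Rightarrow> bool" where
  "is_code n C \<longleftrightarrow> C \<subseteq> Pow {1..n} \<and> {} \<in> C \<and>
     (\<forall>i\<in>{1..n}. \<exists>c\<in>C. i \<in> c) \<and>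
     (\<forall>i\<in>{1..n}. \<forall>j\<in>{1..n}. i \<noteq> j \<longrightarrow> {c\<in>C. i \<in> c} \<noteq> {c\<in>C. j \<in> c})"

definition code_del :: "nat set set \<Rightarrow> nat \<Rightarrow> nat set set" where
  "code_del C n = (\<lambda>c. c - {n}) ` C"

end

theory Submission
  imports Defs
begin

definition evm :: "nat set \<Rightarrow> (nat \<Rightarrow>\<^sub>0 nat) \<Rightarrow> bit" where
  "evm c mon = (if Poly_Mapping.keys mon \<subseteq> c then 1 else 0)"

definition eval :: "nat set \<Rightarrow> f2poly \<Rightarrow> bit" where
  "eval c p = (\<Sum>k\<in>Poly_Mapping.keys p. Poly_Mapping.lookup p k * evm c k)"

lemma eval_superset:
  assumes "finite S" "Poly_Mapping.keys p \<subseteq> S"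
  shows "eval c p = (\<Sum>k\<in>S. Poly_Mapping.lookup p k * evm c k)"
  unfolding eval_def
  by (rule sum.mono_neutral_left) (use assms in \<open>auto simp: in_keys_iff\<close>)

lemma eval_add: "eval c (p + q) = eval c p + eval c q"
proof -
  let ?S = "Poly_Mapping.keys p \<union> Poly_Mapping.keys q"
  have "eval c (p + q) = (\<Sum>k\<in>?S. Poly_Mapping.lookup (p+q) k * evm c k)"
    by (rule eval_superset) (auto simp: keys_add)
  also have "\<dots> = (\<Sum>k\<in>?S. Poly_Mapping.lookup p k * evm c k) + (\<Sum>k\<in>?S. Poly_Mapping.lookup q k * evm c k)"
    by (simp only: lookup_add distrib_right sum.distrib)
  also have "\<dots> = eval c p + eval c q"
    by (subst (1 2) eval_superset[of ?S]) auto
  finally show ?thesis .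
qed

lemma eval_uminus: "eval c (- p) = - eval c p"
  by (simp add: eval_def sum_negf)

lemma eval_diff: "eval c (p - q) = eval c p - eval c q"
  by (metis diff_conv_add_uminus eval_add eval_uminus)

lemma eval_zero[simp]: "eval c 0 = 0"
  by (simp add: eval_def)

lemma eval_sum: "finite I \<Longrightarrow> eval c (sum f I) = (\<Sum>i\<in>I. eval c (f i))"
  by (induction I rule: finite_induct) (simp_all add: eval_add)

lemma eval_single: "eval c (Poly_Mapping.single k a) = a * evm c k"
  by (simp add: eval_def)

lemma keys_add_nat: "Poly_Mapping.keys (k + l :: nat \<Rightarrow>\<^sub>0 nat) = Poly_Mapping.keys k \<union> Poly_Mapping.keys l"
  by (auto simp: in_keys_iff lookup_add)

lemma evm_add: "evm c (k + l) = evm c k * evm c l"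
  by (simp add: evm_def keys_add_nat)

lemma expansion: "p = (\<Sum>k\<in>Poly_Mapping.keys p. Poly_Mapping.single k (Poly_Mapping.lookup p k))"
  by (rule poly_mapping_eqI) (auto simp: lookup_sum lookup_single when_def in_keys_iff)

lemma eval_mult: "eval c (p * q) = eval c p * eval c q"
proof -
  let ?P = "Poly_Mapping.keys p" and ?Q = "Poly_Mapping.keys q"
  have "p * q = (\<Sum>k\<in>?P. Poly_Mapping.single k (Poly_Mapping.lookup p k)) * (\<Sum>l\<in>?Q. Poly_Mapping.single l (Poly_Mapping.lookup q l))"
    using expansion by metis
  also have "\<dots> = (\<Sum>k\<in>?P. \<Sum>l\<in>?Q. Poly_Mapping.single (k + l) (Poly_Mapping.lookup p k * Poly_Mapping.lookup q l))"
    by (simp add: sum_product mult_single)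
  finally have "eval c (p * q) = (\<Sum>k\<in>?P. \<Sum>l\<in>?Q. (Poly_Mapping.lookup p k * evm c k) * (Poly_Mapping.lookup q l * evm c l))"
    by (simp only: eval_sum finite_keys eval_single evm_add ac_simps)
  also have "\<dots> = eval c p * eval c q"
    by (simp only: eval_def sum_product)
  finally show ?thesis .
qed

lemma eval_one[simp]: "eval c 1 = 1"
  by (simp add: eval_def evm_def)

lemma eval_Var: "eval c (Var i) = (if i \<in> c then 1 else 0)"
  by (simp add: Var_def eval_single evm_def)

lemma eval_prod: "finite A \<Longrightarrow> eval c (prod f A) = (\<Prod>i\<in>A. eval c (f i))"
  by (induction A rule: finite_induct) (simp_all add: eval_mult)

lemma prod_bit: "finite A \<Longrightarrow> (\<Prod>i\<in>A. (if P i then 1 else 0 :: bit)) = (if \<forall>i\<in>A. P i then 1 else 0)"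
  by (induction A rule: finite_induct) auto

lemma eval_pm:
  assumes "finite \<sigma>" "finite \<tau>"
  shows "eval c (pm \<sigma> \<tau>) = (if \<sigma> \<subseteq> c \<and> \<tau> \<inter> c = {} then 1 else 0)"
proof -
  have "eval c (pm \<sigma> \<tau>) = (\<Prod>i\<in>\<sigma>. (if i \<in> c then 1 else 0 :: bit)) * (\<Prod>i\<in>\<tau>. (if i \<notin> c then 1 else 0 :: bit))"
    using assms by (simp add: pm_def eval_mult eval_prod eval_diff eval_Var if_distrib cong: if_cong)
  also have "\<dots> = (if \<sigma> \<subseteq> c \<and> \<tau> \<inter> c = {} then 1 else 0)"
    using assms by (simp add: prod_bit) blast
  finally show ?thesis .
qed


lemma polys_mult: "p \<in> polys m \<Longrightarrow> q \<in> polys m \<Longrightarrow> p * q \<in> polys m"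
  unfolding polys_def using keys_mult[of p q] by (fastforce simp: keys_add_nat)

lemma polys_add: "p \<in> polys m \<Longrightarrow> q \<in> polys m \<Longrightarrow> p + q \<in> polys m"
  unfolding polys_def using keys_add[of p q] by blast

lemma polys_diff: "p \<in> polys m \<Longrightarrow> q \<in> polys m \<Longrightarrow> p - q \<in> polys m"
  unfolding polys_def using keys_diff[of p q] by blast

lemma polys_one: "1 \<in> polys m"
  by (simp add: polys_def)

lemma polys_Var: "i \<in> {1..m} \<Longrightarrow> Var i \<in> polys m"
  by (simp add: polys_def Var_def)

lemma polys_prod: "finite A \<Longrightarrow> (\<And>i. i \<in> A \<Longrightarrow> f i \<in> polys m) \<Longrightarrow> prod f A \<in> polys m"
  by (induction A rule: finite_induct) (auto intro: polys_one polys_mult)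

lemma polys_pm: "\<sigma> \<subseteq> {1..m} \<Longrightarrow> \<tau> \<subseteq> {1..m} \<Longrightarrow> pm \<sigma> \<tau> \<in> polys m"
  unfolding pm_def
  by (intro polys_mult polys_prod polys_diff polys_one polys_Var)
     (auto intro: finite_subset)

lemma pm_mult:
  assumes "finite a" "finite b" "finite c" "finite d" "a \<inter> c = {}" "b \<inter> d = {}"
  shows "pm a b * pm c d = pm (a \<union> c) (b \<union> d)"
  using assms by (simp add: pm_def prod.union_disjoint ac_simps)

lemma ideal_sum: "finite I \<Longrightarrow> (\<And>i. i \<in> I \<Longrightarrow> f i \<in> ideal_gen m G) \<Longrightarrow> sum f I \<in> ideal_gen m G"
  by (induction I rule: finite_induct) (auto intro: ideal_gen.intros)

lemma ideal_gen_base: "g \<in> G \<Longrightarrow> g \<in> ideal_gen m G"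
  using ideal_gen.mult[OF _ polys_one, of g G m] by simp

lemma ideal_vanish:
  assumes "f \<in> ideal_gen m G" "\<And>g. g \<in> G \<Longrightarrow> eval c g = 0"
  shows "eval c f = 0"
  using assms by (induction rule: ideal_gen.induct) (auto simp: eval_mult eval_add)

lemma finite_sub: "\<sigma> \<subseteq> {1..(m::nat)} \<Longrightarrow> finite \<sigma>"
  using finite_subset by blast

definition ok :: "nat \<Rightarrow> nat set set \<Rightarrow> nat set \<Rightarrow> nat set \<Rightarrow> bool" where
  "ok m D \<sigma> \<tau> \<longleftrightarrow> (\<forall>c. c \<subseteq> {1..m} \<and> \<sigma> \<subseteq> c \<and> c \<inter> \<tau> = {} \<longrightarrow> c \<notin> D)"

lemma eval_rho:
  assumes "\<sigma> \<subseteq> {1..m}"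
  shows "eval c (rho m \<sigma>) = (if c \<inter> {1..m} = \<sigma> then 1 else 0)"
  unfolding rho_def using assms by (subst eval_pm) (auto intro: finite_subset)

lemma mem_ok:
  assumes "\<sigma> \<subseteq> {1..m}" "\<tau> \<subseteq> {1..m}" "\<sigma> \<inter> \<tau> = {}"
  shows "pm \<sigma> \<tau> \<in> neural_ideal m D \<longleftrightarrow> ok m D \<sigma> \<tau>"
proof
  assume mem: "pm \<sigma> \<tau> \<in> neural_ideal m D"
  show "ok m D \<sigma> \<tau>"
    unfolding ok_def
  proof (intro allI impI notI)
    fix c assume c: "c \<subseteq> {1..m} \<and> \<sigma> \<subseteq> c \<and> c \<inter> \<tau> = {}" and cD: "c \<in> D"
    have "eval c (pm \<sigma> \<tau>) = 0"
      using mem unfolding neural_ideal_def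
    proof (rule ideal_vanish)
      fix g assume "g \<in> {rho m \<sigma> |\<sigma>. \<sigma> \<subseteq> {1..m} \<and> \<sigma> \<notin> D}"
      then obtain s where "g = rho m s" "s \<subseteq> {1..m}" "s \<notin> D" by blast
      moreover have "c \<inter> {1..m} = c" using c by blast
      ultimately show "eval c g = 0" using eval_rho[of s m c] cD by auto
    qed
    moreover have "eval c (pm \<sigma> \<tau>) = 1"
      using assms c by (subst eval_pm) (auto intro: finite_subset)
    ultimately show False by simp
  qed
next
  assume okk: "ok m D \<sigma> \<tau>"
  define F where "F = {1..m} - \<sigma> - \<tau>"
  have fin: "finite \<sigma>" "finite \<tau>" "finite F" using assms by (auto simp: F_def intro: finite_subset)
  have "pm \<sigma> \<tau> = pm \<sigma> \<tau> * (\<Prod>k\<in>F. Var k + (1 - Var k))"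
    by simp
  also have "\<dots> = pm \<sigma> \<tau> * (\<Sum>S\<in>Pow F. (\<Prod>k\<in>S. Var k) * (\<Prod>k\<in>F - S. 1 - Var k))"
    using fin by (simp only: prod_add)
  also have "\<dots> = (\<Sum>S\<in>Pow F. pm \<sigma> \<tau> * pm S (F - S))"
    by (simp add: sum_distrib_left pm_def)
  also have "\<dots> = (\<Sum>S\<in>Pow F. rho m (\<sigma> \<union> S))"
  proof (rule sum.cong[OF refl])
    fix S assume "S \<in> Pow F"
    then have S: "S \<subseteq> F" by simp
    have "pm \<sigma> \<tau> * pm S (F - S) = pm (\<sigma> \<union> S) (\<tau> \<union> (F - S))"
      using fin S by (intro pm_mult) (auto simp: F_def intro: finite_subset)
    also have "\<tau> \<union> (F - S) = {1..m} - (\<sigma> \<union> S)"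
      using S assms by (auto simp: F_def)
    finally show "pm \<sigma> \<tau> * pm S (F - S) = rho m (\<sigma> \<union> S)" by (simp add: rho_def)
  qed
  also have "\<dots> \<in> neural_ideal m D"
    unfolding neural_ideal_def
  proof (intro ideal_sum ideal_gen_base)
    show "finite (Pow F)" using fin by simp
    fix S assume "S \<in> Pow F"
    then have SF: "S \<subseteq> F" by simp
    have c: "\<sigma> \<union> S \<subseteq> {1..m} \<and> \<sigma> \<subseteq> \<sigma> \<union> S \<and> (\<sigma> \<union> S) \<inter> \<tau> = {}"
      using SF assms unfolding F_def by blast
    then have "\<sigma> \<union> S \<subseteq> {1..m}" "\<sigma> \<union> S \<notin> D"
      using okk unfolding ok_def by blast+
    then show "rho m (\<sigma> \<union> S) \<in> {rho m \<sigma> |\<sigma>. \<sigma> \<subseteq> {1..m} \<and> \<sigma> \<notin> D}" by blast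
  qed
  finally show "pm \<sigma> \<tau> \<in> neural_ideal m D" .
qed

lemma dvd_pm:
  assumes "\<sigma> \<subseteq> {1..m}" "\<tau> \<subseteq> {1..m}" "\<sigma> \<inter> \<tau> = {}"
    "\<sigma>' \<subseteq> {1..m}" "\<tau>' \<subseteq> {1..m}" "\<sigma>' \<inter> \<tau>' = {}"
  shows "dvd_in m (pm \<sigma> \<tau>) (pm \<sigma>' \<tau>') \<longleftrightarrow> \<sigma> \<subseteq> \<sigma>' \<and> \<tau> \<subseteq> \<tau>'"
proof
  have fin: "finite \<sigma>" "finite \<tau>" "finite \<sigma>'" "finite \<tau>'"
    using assms by (auto intro: finite_subset)
  assume "dvd_in m (pm \<sigma> \<tau>) (pm \<sigma>' \<tau>')"
  then obtain h where h: "pm \<sigma>' \<tau>' = pm \<sigma> \<tau> * h" unfolding dvd_in_def by blast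
  have *: "\<sigma> \<subseteq> c \<and> \<tau> \<inter> c = {}" if "\<sigma>' \<subseteq> c \<and> \<tau>' \<inter> c = {}" for c
  proof -
    have "eval c (pm \<sigma>' \<tau>') = 1" using that fin by (simp add: eval_pm)
    then have "eval c (pm \<sigma> \<tau>) \<noteq> 0" using h by (metis eval_mult mult_zero_left zero_neq_one)
    then show ?thesis using fin by (simp add: eval_pm split: if_splits)
  qed
  from *[of \<sigma>'] *[of "{1..m} - \<tau>'"] show "\<sigma> \<subseteq> \<sigma>' \<and> \<tau> \<subseteq> \<tau>'"
    using assms(2,4,6) by blast
next
  assume "\<sigma> \<subseteq> \<sigma>' \<and> \<tau> \<subseteq> \<tau>'"
  moreover have "pm \<sigma> \<tau> * pm (\<sigma>' - \<sigma>) (\<tau>' - \<tau>) = pm (\<sigma> \<union> (\<sigma>' - \<sigma>)) (\<tau> \<union> (\<tau>' - \<tau>))"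
    using assms by (intro pm_mult) (auto intro: finite_subset)
  ultimately have "pm \<sigma>' \<tau>' = pm \<sigma> \<tau> * pm (\<sigma>' - \<sigma>) (\<tau>' - \<tau>)"
    by (simp add: Un_absorb1 Un_Diff_cancel)
  moreover have "pm (\<sigma>' - \<sigma>) (\<tau>' - \<tau>) \<in> polys m"
    using assms by (intro polys_pm) auto
  ultimately show "dvd_in m (pm \<sigma> \<tau>) (pm \<sigma>' \<tau>')"
    unfolding dvd_in_def by blast
qed

lemma pm_inj:
  assumes "\<sigma> \<subseteq> {1..m}" "\<tau> \<subseteq> {1..m}" "\<sigma> \<inter> \<tau> = {}"
    "\<sigma>' \<subseteq> {1..m}" "\<tau>' \<subseteq> {1..m}" "\<sigma>' \<inter> \<tau>' = {}"
    "pm \<sigma> \<tau> = pm \<sigma>' \<tau>'"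
  shows "\<sigma> = \<sigma>' \<and> \<tau> = \<tau>'"
proof -
  have "dvd_in m (pm \<sigma> \<tau>) (pm \<sigma>' \<tau>')" "dvd_in m (pm \<sigma>' \<tau>') (pm \<sigma> \<tau>)"
    using assms(7) polys_one unfolding dvd_in_def by (metis mult_1_right)+
  then show ?thesis using dvd_pm assms by (meson subset_antisym)
qed


lemma CF_iff:
  "f \<in> CF m (neural_ideal m D) \<longleftrightarrow>
   (\<exists>\<sigma> \<tau>. \<sigma> \<subseteq> {1..m} \<and> \<tau> \<subseteq> {1..m} \<and> \<sigma> \<inter> \<tau> = {} \<and> f = pm \<sigma> \<tau> \<and> ok m D \<sigma> \<tau> \<and>
      (\<forall>\<sigma>' \<tau>'. \<sigma>' \<subseteq> \<sigma> \<and> \<tau>' \<subseteq> \<tau> \<and> ok m D \<sigma>' \<tau>' \<longrightarrow> \<sigma>' = \<sigma> \<and> \<tau>' = \<tau>))"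
  (is "?L \<longleftrightarrow> ?R")
proof
  assume L: ?L
  then obtain \<sigma> \<tau> where st: "\<sigma> \<subseteq> {1..m}" "\<tau> \<subseteq> {1..m}" "\<sigma> \<inter> \<tau> = {}" "f = pm \<sigma> \<tau>"
    unfolding CF_def pseudo_monomial_def by blast
  have okk: "ok m D \<sigma> \<tau>" using L st mem_ok unfolding CF_def by blast
  have mn: "\<sigma>' = \<sigma> \<and> \<tau>' = \<tau>" if h: "\<sigma>' \<subseteq> \<sigma>" "\<tau>' \<subseteq> \<tau>" "ok m D \<sigma>' \<tau>'" for \<sigma>' \<tau>'
  proof -
    have s': "\<sigma>' \<subseteq> {1..m}" "\<tau>' \<subseteq> {1..m}" "\<sigma>' \<inter> \<tau>' = {}" using h st by auto
    have "pseudo_monomial m (pm \<sigma>' \<tau>')" using s' unfolding pseudo_monomial_def by blast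
    moreover have "pm \<sigma>' \<tau>' \<in> neural_ideal m D" using mem_ok s' h by blast
    moreover have "dvd_in m (pm \<sigma>' \<tau>') f" using dvd_pm[OF s' st(1-3)] h st(4) by blast
    ultimately have "pm \<sigma>' \<tau>' = pm \<sigma> \<tau>" using L st(4) unfolding CF_def by blast
    then show ?thesis using pm_inj[OF s' st(1-3)] by blast
  qed
  show ?R
    by (rule exI[of _ \<sigma>], rule exI[of _ \<tau>]) (use st okk mn in blast)
next
  assume ?R
  then obtain \<sigma> \<tau> where R: "\<sigma> \<subseteq> {1..m} \<and> \<tau> \<subseteq> {1..m} \<and> \<sigma> \<inter> \<tau> = {} \<and> f = pm \<sigma> \<tau> \<and> ok m D \<sigma> \<tau> \<and>
      (\<forall>\<sigma>' \<tau>'. \<sigma>' \<subseteq> \<sigma> \<and> \<tau>' \<subseteq> \<tau> \<and> ok m D \<sigma>' \<tau>' \<longrightarrow> \<sigma>' = \<sigma> \<and> \<tau>' = \<tau>)"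
    by (elim exE) (rule that)
  then have st: "\<sigma> \<subseteq> {1..m}" "\<tau> \<subseteq> {1..m}" "\<sigma> \<inter> \<tau> = {}" "f = pm \<sigma> \<tau>"
    and okk: "ok m D \<sigma> \<tau>"
    and mn: "\<And>\<sigma>' \<tau>'. \<sigma>' \<subseteq> \<sigma> \<Longrightarrow> \<tau>' \<subseteq> \<tau> \<Longrightarrow> ok m D \<sigma>' \<tau>' \<Longrightarrow> \<sigma>' = \<sigma> \<and> \<tau>' = \<tau>"
    by blast+
  have "pseudo_monomial m f" using st unfolding pseudo_monomial_def by blast
  moreover have "f \<in> neural_ideal m D" using mem_ok st okk by blast
  moreover have "g = f" if g: "pseudo_monomial m g" "g \<in> neural_ideal m D" "dvd_in m g f" for g
  proof -
    obtain \<sigma>' \<tau>' where s': "\<sigma>' \<subseteq> {1..m}" "\<tau>' \<subseteq> {1..m}" "\<sigma>' \<inter> \<tau>' = {}" "g = pm \<sigma>' \<tau>'"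
      using g(1) unfolding pseudo_monomial_def by blast
    have "\<sigma>' \<subseteq> \<sigma> \<and> \<tau>' \<subseteq> \<tau>" using dvd_pm[OF s'(1-3) st(1-3)] g(3) s'(4) st(4) by blast
    moreover have "ok m D \<sigma>' \<tau>'" using mem_ok[OF s'(1-3)] g(2) s'(4) by blast
    ultimately show ?thesis using mn s'(4) st(4) by blast
  qed
  ultimately show ?L unfolding CF_def by blast
qed

lemma ok_del:
  assumes "n \<ge> 1" "C \<subseteq> Pow {1..n}" "\<sigma> \<subseteq> {1..n-1}" "\<tau> \<subseteq> {1..n-1}"
  shows "ok (n - 1) (code_del C n) \<sigma> \<tau> \<longleftrightarrow> ok n C \<sigma> \<tau>"
proof
  assume a: "ok (n - 1) (code_del C n) \<sigma> \<tau>"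
  show "ok n C \<sigma> \<tau>" unfolding ok_def
  proof (intro allI impI notI)
    fix c assume c: "c \<subseteq> {1..n} \<and> \<sigma> \<subseteq> c \<and> c \<inter> \<tau> = {}" "c \<in> C"
    have "c - {n} \<in> code_del C n" using c unfolding code_del_def by blast
    moreover have "c - {n} \<subseteq> {1..n-1} \<and> \<sigma> \<subseteq> c - {n} \<and> (c - {n}) \<inter> \<tau> = {}"
      using c assms by auto
    ultimately show False using a unfolding ok_def by blast
  qed
next
  assume a: "ok n C \<sigma> \<tau>"
  show "ok (n - 1) (code_del C n) \<sigma> \<tau>" unfolding ok_def
  proof (intro allI impI notI)
    fix c assume c: "c \<subseteq> {1..n-1} \<and> \<sigma> \<subseteq> c \<and> c \<inter> \<tau> = {}" "c \<in> code_del C n"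
    then obtain d where d: "d \<in> C" "c = d - {n}" unfolding code_del_def by blast
    have "d \<subseteq> {1..n} \<and> \<sigma> \<subseteq> d \<and> d \<inter> \<tau> = {}"
      using c d assms by auto
    then show False using a d unfolding ok_def by blast
  qed
qed

theorem lemma2p1:
  fixes n :: nat and C :: "nat set set"
  assumes "n \<ge> 1" and "is_code n C"
  shows "CF (n - 1) (neural_ideal (n - 1) (code_del C n)) =
         CF n (neural_ideal n C) -
         {f \<in> CF n (neural_ideal n C). dvd_in n (Var n) f \<or> dvd_in n (1 - Var n) f}"
proof -
  have Cs: "C \<subseteq> Pow {1..n}" using assms(2) unfolding is_code_def by blast
  have nn: "{n} \<subseteq> {1..n}" using assms(1) by simp
  have V1: "Var n = pm {n} {}" and V2: "1 - Var n = pm {} {n}" by (simp_all add: pm_def)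
  have dv: "(dvd_in n (Var n) (pm \<sigma> \<tau>) \<or> dvd_in n (1 - Var n) (pm \<sigma> \<tau>)) \<longleftrightarrow> n \<in> \<sigma> \<or> n \<in> \<tau>"
    if "\<sigma> \<subseteq> {1..n}" "\<tau> \<subseteq> {1..n}" "\<sigma> \<inter> \<tau> = {}" for \<sigma> \<tau>
    using dvd_pm[of "{n}" n "{}" \<sigma> \<tau>] dvd_pm[of "{}" n "{n}" \<sigma> \<tau>] that nn
    unfolding V2 unfolding V1 by auto
  have I: "{1..n-1} = {1..n} - {n}" using assms(1) by auto
  have sub: "\<sigma> \<subseteq> {1..n-1} \<longleftrightarrow> \<sigma> \<subseteq> {1..n} \<and> n \<notin> \<sigma>" for \<sigma>
    unfolding I by blast
  show ?thesis
  proof (rule set_eqI)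
    fix f
    show "f \<in> CF (n - 1) (neural_ideal (n - 1) (code_del C n)) \<longleftrightarrow>
      f \<in> CF n (neural_ideal n C) -
         {f \<in> CF n (neural_ideal n C). dvd_in n (Var n) f \<or> dvd_in n (1 - Var n) f}"
    proof
      assume "f \<in> CF (n - 1) (neural_ideal (n - 1) (code_del C n))"
      then obtain \<sigma> \<tau> where R: "\<sigma> \<subseteq> {1..n-1} \<and> \<tau> \<subseteq> {1..n-1} \<and> \<sigma> \<inter> \<tau> = {} \<and> f = pm \<sigma> \<tau> \<and> ok (n - 1) (code_del C n) \<sigma> \<tau> \<and>
      (\<forall>\<sigma>' \<tau>'. \<sigma>' \<subseteq> \<sigma> \<and> \<tau>' \<subseteq> \<tau> \<and> ok (n - 1) (code_del C n) \<sigma>' \<tau>' \<longrightarrow> \<sigma>' = \<sigma> \<and> \<tau>' = \<tau>)"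
        unfolding CF_iff by (elim exE) (rule that)
      then have st: "\<sigma> \<subseteq> {1..n-1}" "\<tau> \<subseteq> {1..n-1}" "\<sigma> \<inter> \<tau> = {}" "f = pm \<sigma> \<tau>"
        "ok (n-1) (code_del C n) \<sigma> \<tau>"
        and mn: "\<And>\<sigma>' \<tau>'. \<sigma>' \<subseteq> \<sigma> \<and> \<tau>' \<subseteq> \<tau> \<and> ok (n-1) (code_del C n) \<sigma>' \<tau>' \<Longrightarrow> \<sigma>' = \<sigma> \<and> \<tau>' = \<tau>"
        by blast+
      have st': "\<sigma> \<subseteq> {1..n}" "\<tau> \<subseteq> {1..n}" "n \<notin> \<sigma>" "n \<notin> \<tau>" using st(1,2) sub by blast+
      have okn: "ok n C \<sigma> \<tau>" using ok_del[OF assms(1) Cs st(1,2)] st(5) by blast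
      have "\<sigma>' = \<sigma> \<and> \<tau>' = \<tau>" if "\<sigma>' \<subseteq> \<sigma>" "\<tau>' \<subseteq> \<tau>" "ok n C \<sigma>' \<tau>'" for \<sigma>' \<tau>'
      proof -
        have "\<sigma>' \<subseteq> {1..n-1}" "\<tau>' \<subseteq> {1..n-1}" using that st by auto
        then have "ok (n-1) (code_del C n) \<sigma>' \<tau>'" using ok_del[OF assms(1) Cs] that(3) by blast
        then show ?thesis using that(1,2) mn by blast
      qed
      then have X: "\<forall>\<sigma>' \<tau>'. \<sigma>' \<subseteq> \<sigma> \<and> \<tau>' \<subseteq> \<tau> \<and> ok n C \<sigma>' \<tau>' \<longrightarrow> \<sigma>' = \<sigma> \<and> \<tau>' = \<tau>" by blast
      have "f \<in> CF n (neural_ideal n C)" unfolding CF_iff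
        by (rule exI[of _ \<sigma>], rule exI[of _ \<tau>], intro conjI) (fact st'(1) st'(2) st(3) st(4) okn X)+
      moreover have "\<not> (dvd_in n (Var n) f \<or> dvd_in n (1 - Var n) f)"
        using dv[OF st'(1,2) st(3)] st(4) st' by blast
      ultimately show "f \<in> CF n (neural_ideal n C) -
         {f \<in> CF n (neural_ideal n C). dvd_in n (Var n) f \<or> dvd_in n (1 - Var n) f}" by blast
    next
      assume a: "f \<in> CF n (neural_ideal n C) -
         {f \<in> CF n (neural_ideal n C). dvd_in n (Var n) f \<or> dvd_in n (1 - Var n) f}"
      then have "f \<in> CF n (neural_ideal n C)" by blast
      then obtain \<sigma> \<tau> where R: "\<sigma> \<subseteq> {1..n} \<and> \<tau> \<subseteq> {1..n} \<and> \<sigma> \<inter> \<tau> = {} \<and> f = pm \<sigma> \<tau> \<and> ok n C \<sigma> \<tau> \<and>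
      (\<forall>\<sigma>' \<tau>'. \<sigma>' \<subseteq> \<sigma> \<and> \<tau>' \<subseteq> \<tau> \<and> ok n C \<sigma>' \<tau>' \<longrightarrow> \<sigma>' = \<sigma> \<and> \<tau>' = \<tau>)"
        unfolding CF_iff by (elim exE) (rule that)
      then have st: "\<sigma> \<subseteq> {1..n}" "\<tau> \<subseteq> {1..n}" "\<sigma> \<inter> \<tau> = {}" "f = pm \<sigma> \<tau>"
        "ok n C \<sigma> \<tau>"
        and mn: "\<And>\<sigma>' \<tau>'. \<sigma>' \<subseteq> \<sigma> \<and> \<tau>' \<subseteq> \<tau> \<and> ok n C \<sigma>' \<tau>' \<Longrightarrow> \<sigma>' = \<sigma> \<and> \<tau>' = \<tau>"
        by blast+
      have "n \<notin> \<sigma>" "n \<notin> \<tau>" using a dv[OF st(1-3)] st(4) by blast+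
      then have st': "\<sigma> \<subseteq> {1..n-1}" "\<tau> \<subseteq> {1..n-1}" using st(1,2) sub by blast+
      have okn: "ok (n-1) (code_del C n) \<sigma> \<tau>" using ok_del[OF assms(1) Cs st'] st(5) by blast
      have "\<sigma>' = \<sigma> \<and> \<tau>' = \<tau>" if "\<sigma>' \<subseteq> \<sigma>" "\<tau>' \<subseteq> \<tau>" "ok (n-1) (code_del C n) \<sigma>' \<tau>'" for \<sigma>' \<tau>'
      proof -
        have "\<sigma>' \<subseteq> {1..n-1}" "\<tau>' \<subseteq> {1..n-1}" using that st' by auto
        then have "ok n C \<sigma>' \<tau>'" using ok_del[OF assms(1) Cs] that(3) by blast
        then show ?thesis using that(1,2) mn by blast
      qed
      then have X: "\<forall>\<sigma>' \<tau>'. \<sigma>' \<subseteq> \<sigma> \<and> \<tau>' \<subseteq> \<tau> \<and> ok (n - 1) (code_del C n) \<sigma>' \<tau>' \<longrightarrow> \<sigma>' = \<sigma> \<and> \<tau>' = \<tau>" by blast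
      show "f \<in> CF (n - 1) (neural_ideal (n - 1) (code_del C n))"
        unfolding CF_iff by (rule exI[of _ \<sigma>], rule exI[of _ \<tau>], intro conjI) (fact st'(1) st'(2) st(3) st(4) okn X)+
    qed
  qed
qed

end
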